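(* Let $\gamma$ be a Jordan curve in $\mathbb{R}^2$ and $D$ an open disk with $D\subset\operatorname{Int}\gamma$. Suppose $a,b$ are distinct points of $\gamma$ with $\gamma[a,b]\cap\overline{D}=\{a,b\}$. Then $D\subset\operatorname{Ext}(\gamma[a,b]\cup\partial D[a,b])$ (i.e. $\gamma$ winds positively around $D$ from $a$ to $b$), and $D\subset\operatorname{Int}(\gamma[a,b]\cup\partial D[b,a])$.
   Context: For a Jordan curve $\gamma$, $\operatorname{Int}\gamma$ and $\operatorname{Ext}\gamma$ are the bounded and unbounded components of $\mathbb{R}^2\setminus\gamma$. A parametrization of a Jordan curve is positively oriented if its argument variation around every point of its interior equals $2\pi$ (for circles: counterclockwise). For distinct $a,b$ on a Jordan curve $\gamma$, $\gamma[a,b]$ denotes the closed subarc traversed from $a$ to $b$ along the positive orientation; this notation applies also to the circle $\partial D$. *)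

theory Defs
  imports "HOL-Complex_Analysis.Complex_Analysis"
begin

text \<open>The plane R^2 is identified with the complex plane. A Jordan curve is given by
a parametrization g on [0,1] that is a simple closed path.\<close>

definition jordan_curve :: "(real \<Rightarrow> complex) \<Rightarrow> bool" where
  "jordan_curve g \<longleftrightarrow> simple_path g \<and> pathfinish g = pathstart g"

definition positively_oriented :: "(real \<Rightarrow> complex) \<Rightarrow> bool" where
  "positively_oriented g \<longleftrightarrow> (\<forall>z \<in> inside (path_image g). winding_number g z = 1)"

definition subarc :: "(real \<Rightarrow> complex) \<Rightarrow> complex \<Rightarrow> complex \<Rightarrow> complex set" where
  "subarc g a b =
     (let s = (THE s. s \<in> {0..<1} \<and> g s = a);
          t = (THE t. t \<in> {0..<1} \<and> g t = b)
      in if s \<le> t then g ` {s..t} else g ` ({s..1} \<union> {0..t}))"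

end

theory Submission
  imports Defs
begin


lemma the_param:
  assumes "simple_path h" "s \<in> {0..<1}"
  shows "(THE x. x \<in> {0..<1} \<and> h x = h s) = s"
proof (rule the_equality)
  fix x assume "x \<in> {0..<1} \<and> h x = h s"
  then show "x = s" using assms unfolding simple_path_def loop_free_def
    by (metis atLeastLessThan_iff atLeastAtMost_iff less_eq_real_def less_irrefl)
qed (use assms in auto)

lemma param_exists:
  assumes "pathfinish h = pathstart h" "x \<in> path_image h"
  obtains s where "s \<in> {0..<1}" "h s = x"
proof -
  obtain s where s: "s \<in> {0..1}" "h s = x" using assms(2) unfolding path_image_def by auto
  show ?thesis
  proof (cases "s = 1")
    case True
    then show ?thesis using that[of 0] assms s by (auto simp: pathfinish_def pathstart_def)
  next
    case False
    then show ?thesis using that[of s] s by auto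
  qed
qed

lemma arc_decomp:
  fixes h :: "real \<Rightarrow> complex"
  assumes sp: "simple_path h" and cl: "pathfinish h = pathstart h"
    and s: "s \<in> {0..<1}" and t: "t \<in> {0..<1}" and st: "s \<noteq> t"
  defines "k \<equiv> shiftpath s h" and "t' \<equiv> (if s \<le> t then t - s else 1 + t - s)"
  shows "0 < t'" "t' < 1" "simple_path k" "pathfinish k = pathstart k"
    "path_image k = path_image h" "k 0 = h s" "k t' = h t"
    "path_image (subpath 0 t' k) = (if s \<le> t then h ` {s..t} else h ` ({s..1} \<union> {0..t}))"
    "path_image (subpath t' 1 k) = (if t \<le> s then h ` {t..s} else h ` ({t..1} \<union> {0..s}))"
proof -
  show t'0: "0 < t'" "t' < 1" using s t st by (auto simp: t'_def)
  show "simple_path k" unfolding k_def using simple_path_shiftpath[OF sp cl] s by auto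
  show "pathfinish k = pathstart k" unfolding k_def using s cl
    by (cases "s = 0") (auto simp: pathfinish_def pathstart_def shiftpath_def)
  show "path_image k = path_image h" unfolding k_def using path_image_shiftpath[OF _ cl] s by auto
  show "k 0 = h s" using s by (simp add: k_def shiftpath_def)
  have h01: "h 0 = h 1" using cl by (simp add: pathfinish_def pathstart_def)
  show "k t' = h t" using s t h01 by (auto simp: k_def shiftpath_def t'_def)
  show "path_image (subpath 0 t' k) = (if s \<le> t then h ` {s..t} else h ` ({s..1} \<union> {0..t}))"
  proof (cases "s \<le> t")
    case True
    have "k ` {0..t'} = h ` {s..t}"
    proof
      show "k ` {0..t'} \<subseteq> h ` {s..t}"
        using True s t by (auto simp: k_def shiftpath_def t'_def)
      show "h ` {s..t} \<subseteq> k ` {0..t'}"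
      proof
        fix y assume "y \<in> h ` {s..t}"
        then obtain x where x: "x \<in> {s..t}" "y = h x" by blast
        then have "y = k (x - s)" "x - s \<in> {0..t'}" using True s t by (auto simp: k_def shiftpath_def t'_def)
        then show "y \<in> k ` {0..t'}" by blast
      qed
    qed
    then show ?thesis using True t'0 by (simp add: path_image_subpath)
  next
    case False
    have "k ` {0..t'} = h ` ({s..1} \<union> {0..t})"
    proof
      show "k ` {0..t'} \<subseteq> h ` ({s..1} \<union> {0..t})"
      proof
        fix y assume "y \<in> k ` {0..t'}"
        then obtain x where x: "x \<in> {0..t'}" "y = k x" by blast
        show "y \<in> h ` ({s..1} \<union> {0..t})"
        proof (cases "s + x \<le> 1")
          case True
          then show ?thesis using x s by (auto simp: k_def shiftpath_def)
        next
          case F: False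
          then have "y = h (s + x - 1)" "s + x - 1 \<in> {0..t}" using x False by (auto simp: k_def shiftpath_def t'_def)
          then show ?thesis by blast
        qed
      qed
      show "h ` ({s..1} \<union> {0..t}) \<subseteq> k ` {0..t'}"
      proof
        fix y assume "y \<in> h ` ({s..1} \<union> {0..t})"
        then obtain x where x: "x \<in> {s..1} \<union> {0..t}" "y = h x" by blast
        show "y \<in> k ` {0..t'}"
        proof (cases "x \<in> {s..1}")
          case True
          then have "y = k (x - s)" "x - s \<in> {0..t'}" using x False s t by (auto simp: k_def shiftpath_def t'_def)
          then show ?thesis by blast
        next
          case F: False
          then have xx: "x \<in> {0..t}" using x by auto
          show ?thesis
          proof (cases "x = 0")
            case True
            then have "y = k (1 - s)" "1 - s \<in> {0..t'}" using x h01 False s t by (auto simp: k_def shiftpath_def t'_def)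
            then show ?thesis by blast
          next
            case x0: False
            then have "y = k (x + 1 - s)" "x + 1 - s \<in> {0..t'}" using x xx False s t by (auto simp: k_def shiftpath_def t'_def)
            then show ?thesis by blast
          qed
        qed
      qed
    qed
    then show ?thesis using False t'0 by (simp add: path_image_subpath)
  qed
  show "path_image (subpath t' 1 k) = (if t \<le> s then h ` {t..s} else h ` ({t..1} \<union> {0..s}))"
  proof (cases "t \<le> s")
    case True
    then have ts: "t < s" using st by auto
    have "k ` {t'..1} = h ` {t..s}"
    proof
      show "k ` {t'..1} \<subseteq> h ` {t..s}"
      proof
        fix y assume "y \<in> k ` {t'..1}"
        then obtain x where x: "x \<in> {t'..1}" "y = k x" by blast
        show "y \<in> h ` {t..s}"
        proof (cases "s + x \<le> 1")
          case True
          then have "s + x = 1" using x ts t by (auto simp: t'_def)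
          then have "y = h 0" using x True h01 by (auto simp: k_def shiftpath_def)
          moreover have "s + x - 1 \<in> {t..s}" using x ts `s + x = 1` s t by (auto simp: t'_def)
          ultimately show ?thesis using `s + x = 1` by force
        next
          case F: False
          then have "y = h (s + x - 1)" "s + x - 1 \<in> {t..s}" using x ts s by (auto simp: k_def shiftpath_def t'_def)
          then show ?thesis by blast
        qed
      qed
      show "h ` {t..s} \<subseteq> k ` {t'..1}"
      proof
        fix y assume "y \<in> h ` {t..s}"
        then obtain x where x: "x \<in> {t..s}" "y = h x" by blast
        show "y \<in> k ` {t'..1}"
        proof (cases "x = 0")
          case True
          then have "y = k (1 - s)" "1 - s \<in> {t'..1}" using x h01 ts s t by (auto simp: k_def shiftpath_def t'_def)
          then show ?thesis by blast
        next
          case x0: False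
          then have "y = k (x + 1 - s)" "x + 1 - s \<in> {t'..1}" using x ts s t by (auto simp: k_def shiftpath_def t'_def)
          then show ?thesis by blast
        qed
      qed
    qed
    then show ?thesis using True t'0 by (simp add: path_image_subpath)
  next
    case False
    have "k ` {t'..1} = h ` ({t..1} \<union> {0..s})"
    proof
      show "k ` {t'..1} \<subseteq> h ` ({t..1} \<union> {0..s})"
      proof
        fix y assume "y \<in> k ` {t'..1}"
        then obtain x where x: "x \<in> {t'..1}" "y = k x" by blast
        show "y \<in> h ` ({t..1} \<union> {0..s})"
        proof (cases "s + x \<le> 1")
          case True
          then have "y = h (s + x)" "s + x \<in> {t..1}" using x False s by (auto simp: k_def shiftpath_def t'_def)
          then show ?thesis by blast
        next
          case F: False
          then have "y = h (s + x - 1)" "s + x - 1 \<in> {0..s}" using x False s by (auto simp: k_def shiftpath_def t'_def)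
          then show ?thesis by blast
        qed
      qed
      show "h ` ({t..1} \<union> {0..s}) \<subseteq> k ` {t'..1}"
      proof
        fix y assume "y \<in> h ` ({t..1} \<union> {0..s})"
        then obtain x where x: "x \<in> {t..1} \<union> {0..s}" "y = h x" by blast
        show "y \<in> k ` {t'..1}"
        proof (cases "x \<in> {t..1}")
          case True
          then have "y = k (x - s)" "x - s \<in> {t'..1}" using x False s t by (auto simp: k_def shiftpath_def t'_def)
          then show ?thesis by blast
        next
          case F: False
          then have xx: "x \<in> {0..s}" using x by auto
          show ?thesis
          proof (cases "x = 0")
            case True
            then have "y = k (1 - s)" "1 - s \<in> {t'..1}" using x h01 False s t by (auto simp: k_def shiftpath_def t'_def)
            then show ?thesis by blast
          next
            case x0: False
            then have "y = k (x + 1 - s)" "x + 1 - s \<in> {t'..1}" using x xx False s t by (auto simp: k_def shiftpath_def t'_def)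
            then show ?thesis by blast
          qed
        qed
      qed
    qed
    then show ?thesis using False t'0 by (simp add: path_image_subpath)
  qed
qed



lemma outside_sub_closure:
  assumes "connected (outside G)" "S \<subseteq> G \<union> inside G"
  shows "outside G \<subseteq> outside S"
proof
  fix x assume x: "x \<in> outside G"
  have dis: "outside G \<subseteq> - S" using assms(2) by (auto simp: inside_def outside_def)
  have "outside G \<subseteq> connected_component_set (- S) x"
    by (rule connected_component_maximal[OF x assms(1) dis])
  moreover have "\<not> bounded (outside G)"
  proof
    assume "bounded (outside G)"
    moreover have "connected_component_set (- G) x \<subseteq> outside G"
      using x by (metis connected_component_eq mem_Collect_eq outside subsetI)
    ultimately show False using x bounded_subset by (auto simp: outside_def)
  qed
  ultimately show "x \<in> outside S" using x dis bounded_subset by (auto simp: outside_def)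
qed

lemma core:
  fixes g P R Q :: "real \<Rightarrow> complex"
  assumes sg: "simple_path g" and cg: "pathfinish g = pathstart g"
    and pos: "\<forall>z\<in>inside(path_image g). winding_number g z = 1"
    and pP: "path P" and pR: "path R" and pQ: "path Q"
    and e1: "pathstart R = pathfinish P" and e2: "pathfinish R = pathstart P"
    and e3: "pathstart Q = pathfinish P" and e4: "pathfinish Q = pathstart P"
    and PR: "path_image P \<union> path_image R = path_image g"
    and dec: "\<forall>z. z \<notin> path_image g \<longrightarrow> winding_number g z = winding_number P z + winding_number R z"
    and sC: "simple_path (P +++ Q)"
    and Qsub: "path_image Q \<subseteq> path_image g \<union> inside(path_image g)"
    and p: "p \<in> path_image P" "p \<notin> path_image R" "p \<notin> path_image Q"
  shows "\<forall>z \<in> inside(path_image (P +++ Q)). winding_number (P +++ Q) z = 1"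
proof -
  define \<Gamma> where "\<Gamma> = path_image g"
  define C where "C = P +++ Q"
  define S where "S = path_image C"
  have S: "S = path_image P \<union> path_image Q" unfolding S_def C_def using e3 by (simp add: path_image_join)
  have pC: "path C" unfolding C_def using pP pQ e3 by simp
  have cC: "pathfinish C = pathstart C" unfolding C_def using e4 by simp
  note J1 = Jordan_inside_outside[OF sg cg, folded \<Gamma>_def]
  note J2 = Jordan_inside_outside[OF sC[folded C_def] cC, folded S_def]
  have out: "outside \<Gamma> \<subseteq> outside S"
    by (rule outside_sub_closure) (use J1 S Qsub PR \<Gamma>_def in auto)
  have wC: "winding_number C z = winding_number P z + winding_number Q z" if "z \<notin> S" for z
    unfolding C_def using that S pP pQ e3 by (intro winding_number_join) auto
  define L where "L = R +++ reversepath Q"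
  have pL: "path L" unfolding L_def using pR pQ e2 e4 by simp
  have cL: "pathfinish L = pathstart L" unfolding L_def using e1 e3 by simp
  have iL: "path_image L = path_image R \<union> path_image Q" unfolding L_def using e2 e4
    by (simp add: path_image_join)
  have wL: "winding_number L z = winding_number R z - winding_number Q z"
    if "z \<notin> path_image R" "z \<notin> path_image Q" for z
    unfolding L_def using that pR pQ e2 e4
    by (simp add: winding_number_join winding_number_reversepath)
  have key: "winding_number g z - winding_number C z = winding_number L z"
    if "z \<notin> \<Gamma>" "z \<notin> S" for z
  proof -
    have "z \<notin> path_image R" "z \<notin> path_image Q" using that PR S \<Gamma>_def by auto
    then show ?thesis using wL wC[OF that(2)] dec that(1) \<Gamma>_def by auto
  qed
  have "open (- (path_image R \<union> path_image Q))"
    using pR pQ by (intro open_Compl closed_Un closed_path_image)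
  then obtain e where e: "e > 0" "ball p e \<subseteq> - (path_image R \<union> path_image Q)"
    using p unfolding open_contains_ball by (metis ComplI UnE)
  have "winding_number L constant_on ball p e"
    by (rule winding_number_constant[OF pL cL]) (use e iL in auto)
  then obtain k where k: "\<And>z. z \<in> ball p e \<Longrightarrow> winding_number L z = k"
    by (auto simp: constant_on_def)
  have p\<Gamma>: "p \<in> \<Gamma>" using p PR \<Gamma>_def by auto
  then have "p \<in> frontier (outside \<Gamma>)" using J1 by simp
  then obtain x1 where x1: "x1 \<in> outside \<Gamma>" "dist p x1 < e"
    using e(1) by (auto simp: frontier_straddle)
  have "x1 \<notin> \<Gamma>" "x1 \<notin> S" using x1 out outside_no_overlap by blast+
  then have "winding_number g x1 - winding_number C x1 = k" using key k x1 by auto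
  moreover have "winding_number g x1 = 0"
    using winding_number_zero_in_outside[OF simple_path_imp_path[OF sg] cg] x1 \<Gamma>_def by auto
  moreover have "winding_number C x1 = 0"
    using winding_number_zero_in_outside[OF pC cC] x1 out S_def by auto
  ultimately have k0: "k = 0" by simp
  have insG: "inside S \<inter> \<Gamma> = {}"
  proof (rule ccontr)
    assume "inside S \<inter> \<Gamma> \<noteq> {}"
    then obtain y where y: "y \<in> inside S" "y \<in> \<Gamma>" by auto
    then obtain d where d: "d > 0" "ball y d \<subseteq> inside S" using J2 by (meson open_contains_ball)
    have "y \<in> frontier (outside \<Gamma>)" using J1 y by simp
    then obtain x where "x \<in> outside \<Gamma>" "dist y x < d" using d(1) by (auto simp: frontier_straddle)
    then have "x \<in> inside S" "x \<in> outside S" using d out by auto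
    then show False using J2 by blast
  qed
  have "p \<in> S" using p S by auto
  then have "p \<in> frontier (inside S)" using J2 by simp
  then obtain x2 where x2: "x2 \<in> inside S" "dist p x2 < e"
    using e(1) by (auto simp: frontier_straddle)
  have x2G: "x2 \<notin> \<Gamma>" using insG x2 by auto
  have x2S: "x2 \<notin> S" using x2 inside_no_overlap by blast
  have "x2 \<notin> outside \<Gamma>" using x2 out J2 by blast
  then have "x2 \<in> inside \<Gamma>" using x2G inside_Un_outside[of \<Gamma>] by blast
  then have "winding_number g x2 = 1" using pos \<Gamma>_def by auto
  moreover have "winding_number g x2 - winding_number C x2 = k" using key k x2 x2G x2S by auto
  ultimately have w2: "winding_number C x2 = 1" using k0 by simp
  have "winding_number C constant_on inside S"
    by (rule winding_number_constant[OF pC cC]) (use J2 S_def in auto)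
  then have "\<forall>z\<in>inside S. winding_number C z = winding_number C x2"
    using x2 by (auto simp: constant_on_def)
  then show ?thesis using w2 unfolding S_def C_def by auto
qed



lemma subarc_eq:
  assumes "simple_path h" "s \<in> {0..<1}" "t \<in> {0..<1}"
  shows "subarc h (h s) (h t) = (if s \<le> t then h ` {s..t} else h ` ({s..1} \<union> {0..t}))"
  unfolding subarc_def Let_def using the_param[OF assms(1,2)] the_param[OF assms(1,3)] by simp

lemma not_mid:
  assumes "simple_path k" "0 < t'" "t' < 1" "y \<in> {0..1}" "k (t'/2) = k y"
  shows "y = t'/2"
proof -
  have m: "t'/2 \<in> {0..1}" using assms(2,3) by auto
  have "t'/2 = y \<or> t'/2 = 0 \<and> y = 1 \<or> t'/2 = 1 \<and> y = 0"
    using assms(1,4,5) m unfolding simple_path_def loop_free_def by blast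
  then show ?thesis using assms(2,3) by auto
qed

theorem lemma4:
  fixes g :: "real \<Rightarrow> complex" and c :: complex and r :: real and a b :: complex
  assumes "jordan_curve g"
    and "positively_oriented g"
    and "r > 0"
    and "ball c r \<subseteq> inside (path_image g)"
    and "a \<in> path_image g" and "b \<in> path_image g" and "a \<noteq> b"
    and "subarc g a b \<inter> cball c r = {a, b}"
  shows "ball c r \<subseteq> outside (subarc g a b \<union> subarc (circlepath c r) a b) \<and>
         ball c r \<subseteq> inside (subarc g a b \<union> subarc (circlepath c r) b a)"
proof -
  have sg: "simple_path g" and cg: "pathfinish g = pathstart g"
    using assms(1) by (auto simp: jordan_curve_def)
  have pos: "\<forall>z\<in>inside(path_image g). winding_number g z = 1"
    using assms(2) by (auto simp: positively_oriented_def)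
  define \<Gamma> where "\<Gamma> = path_image g"
  note J1 = Jordan_inside_outside[OF sg cg, folded \<Gamma>_def]
  have ballG: "ball c r \<inter> \<Gamma> = {}" using assms(4) inside_no_overlap \<Gamma>_def by blast
  obtain s where s: "s \<in> {0..<1}" "g s = a" using param_exists[OF cg assms(5)] by blast
  obtain t where t: "t \<in> {0..<1}" "g t = b" using param_exists[OF cg assms(6)] by blast
  have st: "s \<noteq> t" using s t assms(7) by auto
  define k where "k = shiftpath s g"
  define t' where "t' = (if s \<le> t then t - s else 1 + t - s)"
  note AD = arc_decomp[OF sg cg s(1) t(1) st, folded k_def t'_def]
  define P where "P = subpath 0 t' k"
  define R where "R = subpath t' 1 k"
  have sub_g: "subarc g a b = path_image P"
    unfolding P_def AD(8) using subarc_eq[OF sg s(1) t(1)] s t by simp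
  have sk: "simple_path k" and ck: "pathfinish k = pathstart k" using AD by auto
  have pk: "path k" using sk simple_path_imp_path by blast
  have k0: "k 0 = a" and kt: "k t' = b" and k1: "k 1 = a"
    using AD s t ck by (auto simp: pathfinish_def pathstart_def)
  have ab_cb: "a \<in> cball c r" "b \<in> cball c r" using assms(8) by auto
  have "a \<notin> ball c r" "b \<notin> ball c r" using ballG assms(5,6) \<Gamma>_def by blast+
  then have a_sph: "a \<in> sphere c r" and b_sph: "b \<in> sphere c r" using ab_cb by auto
  define cp where "cp = circlepath c r"
  have scp: "simple_path cp" using assms(3) by (simp add: cp_def simple_path_circlepath)
  have ccp: "pathfinish cp = pathstart cp" by (simp add: cp_def)
  have icp: "path_image cp = sphere c r" using assms(3) by (simp add: cp_def)
  obtain u where u: "u \<in> {0..<1}" "cp u = a" using param_exists[OF ccp] a_sph icp by metis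
  obtain v where v: "v \<in> {0..<1}" "cp v = b" using param_exists[OF ccp] b_sph icp by metis
  have uv: "u \<noteq> v" using u v assms(7) by auto
  define k2 where "k2 = shiftpath u cp"
  define v' where "v' = (if u \<le> v then v - u else 1 + v - u)"
  note AD2 = arc_decomp[OF scp ccp u(1) v(1) uv, folded k2_def v'_def]
  define \<alpha> where "\<alpha> = subpath 0 v' k2"
  define \<beta> where "\<beta> = subpath v' 1 k2"
  have sub_ab: "subarc cp a b = path_image \<alpha>"
    unfolding \<alpha>_def AD2(8) using subarc_eq[OF scp u(1) v(1)] u v by simp
  have sub_ba: "subarc cp b a = path_image \<beta>"
    unfolding \<beta>_def AD2(9) using subarc_eq[OF scp v(1) u(1)] u v by simp
  have sk2: "simple_path k2" and ck2: "pathfinish k2 = pathstart k2" using AD2 by auto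
  have pk2: "path k2" using sk2 simple_path_imp_path by blast
  have k20: "k2 0 = a" and k2v: "k2 v' = b" and k21: "k2 1 = a"
    using AD2 u v ck2 by (auto simp: pathfinish_def pathstart_def)
  have ik2: "path_image k2 = sphere c r" using AD2 icp by simp
  have ia: "path_image \<alpha> \<subseteq> sphere c r" unfolding \<alpha>_def
    using path_image_subpath_subset[of 0 v' k2] AD2(1,2) ik2 by auto
  have ib: "path_image \<beta> \<subseteq> sphere c r" unfolding \<beta>_def
    using path_image_subpath_subset[of v' 1 k2] AD2(1,2) ik2 by auto
  have pa: "path \<alpha>" and pb: "path \<beta>" unfolding \<alpha>_def \<beta>_def using pk2 AD2(1,2) by auto
  have pP: "path P" and pR: "path R" unfolding P_def R_def using pk AD(1,2) by auto
  have arcP: "arc P" unfolding P_def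
    using arc_simple_path_subpath[OF sk, of 0 t'] AD(1,2) k0 kt assms(7) by auto
  have arca: "arc \<alpha>" unfolding \<alpha>_def
    using arc_simple_path_subpath[OF sk2, of 0 v'] AD2(1,2) k20 k2v assms(7) by auto
  have arcb: "arc \<beta>" unfolding \<beta>_def
    using arc_simple_path_subpath[OF sk2, of v' 1] AD2(1,2) k21 k2v assms(7) by auto
  have PcB: "path_image P \<inter> cball c r = {a, b}" using assms(8) sub_g by simp
  have iPR: "path_image P \<union> path_image R = \<Gamma>"
  proof -
    have "path_image P \<union> path_image R = k ` ({0..t'} \<union> {t'..1})"
      unfolding P_def R_def using AD(1,2) by (simp add: path_image_subpath image_Un)
    also have "{0..t'} \<union> {t'..1} = {0..1::real}" using AD(1,2) by auto
    finally show ?thesis using AD(5) \<Gamma>_def by (simp add: path_image_def)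
  qed
  have dec: "\<forall>z. z \<notin> path_image g \<longrightarrow> winding_number g z = winding_number P z + winding_number R z"
  proof (intro allI impI)
    fix z assume z: "z \<notin> path_image g"
    have "winding_number P z + winding_number R z = winding_number (subpath 0 1 k) z"
      unfolding P_def R_def using z AD(1,2,5) by (intro winding_number_subpath_combine[OF pk]) auto
    also have "\<dots> = winding_number g z" unfolding k_def
      using winding_number_shiftpath[OF simple_path_imp_path[OF sg] z cg] s by simp
    finally show "winding_number g z = winding_number P z + winding_number R z" by simp
  qed
  have sph_sub: "sphere c r \<subseteq> \<Gamma> \<union> inside \<Gamma>"
  proof -
    have "sphere c r \<subseteq> closure (ball c r)" using assms(3) by auto
    also have "\<dots> \<subseteq> closure (inside \<Gamma>)" using assms(4) \<Gamma>_def closure_mono by blast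
    also have "\<dots> = \<Gamma> \<union> inside \<Gamma>" using J1 closure_Un_frontier by auto
    finally show ?thesis .
  qed
  define p where "p = k (t'/2)"
  have iP: "path_image P = k ` {0..t'}" unfolding P_def using AD(1) by (simp add: path_image_subpath)
  have iR: "path_image R = k ` {t'..1}" unfolding R_def using AD(2) by (simp add: path_image_subpath)
  have "t'/2 \<in> {0..t'}" using AD(1) by simp
  then have pinP: "p \<in> path_image P" unfolding iP p_def by (rule imageI)
  have pnR: "p \<notin> path_image R"
  proof
    assume "p \<in> path_image R"
    then obtain y where y: "y \<in> {t'..1}" "k y = p" unfolding iR by blast
    then have "y \<in> {0..1}" using AD(1) by simp
    then have "y = t'/2" using not_mid[OF sk AD(1,2)] y(2) p_def by metis
    then show False using y(1) AD(1) by simp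
  qed
  have pncb: "p \<notin> cball c r"
  proof
    assume "p \<in> cball c r"
    then have "p \<in> {a, b}" using PcB pinP by blast
    then have "k (t'/2) = k 0 \<or> k (t'/2) = k t'" using k0 kt p_def by auto
    moreover have "(0::real) \<in> {0..1}" "t' \<in> {0..1}" using AD(1,2) by auto
    ultimately have "0 = t'/2 \<or> t' = t'/2" using not_mid[OF sk AD(1,2)] by metis
    then show False using AD(1) by simp
  qed
  have sphcb: "sphere c r \<subseteq> cball c r" by auto
  define C1 where "C1 = P +++ reversepath \<alpha>"
  define C2 where "C2 = P +++ \<beta>"
  have eP: "pathstart P = a" "pathfinish P = b" unfolding P_def using k0 kt by auto
  have ea: "pathstart \<alpha> = a" "pathfinish \<alpha> = b" unfolding \<alpha>_def using k20 k2v by auto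
  have eb: "pathstart \<beta> = b" "pathfinish \<beta> = a" unfolding \<beta>_def using k21 k2v by auto
  have eR: "pathstart R = b" "pathfinish R = a" unfolding R_def using k1 kt by auto
  have Pa: "path_image P \<inter> path_image \<alpha> \<subseteq> {a,b}" using PcB ia sphcb by blast
  have Pb: "path_image P \<inter> path_image \<beta> \<subseteq> {a,b}" using PcB ib sphcb by blast
  have sC1: "simple_path C1" unfolding C1_def
    using arcP arca eP ea Pa by (intro simple_path_join_loop) (auto simp: arc_reversepath)
  have sC2: "simple_path C2" unfolding C2_def
    using arcP arcb eP eb Pb by (intro simple_path_join_loop) auto
  have e1: "pathstart R = pathfinish P" and e2: "pathfinish R = pathstart P"
    by (simp_all add: eR eP)
  have pra: "path (reversepath \<alpha>)" using pa by simp
  have e3a: "pathstart (reversepath \<alpha>) = pathfinish P" and e4a: "pathfinish (reversepath \<alpha>) = pathstart P"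
    by (simp_all add: ea eP)
  have e3b: "pathstart \<beta> = pathfinish P" and e4b: "pathfinish \<beta> = pathstart P"
    by (simp_all add: eb eP)
  have PR: "path_image P \<union> path_image R = path_image g" using iPR \<Gamma>_def by simp
  have Qa: "path_image (reversepath \<alpha>) \<subseteq> path_image g \<union> inside (path_image g)"
    using ia sph_sub \<Gamma>_def by (simp add: path_image_reversepath)
  have Qb: "path_image \<beta> \<subseteq> path_image g \<union> inside (path_image g)"
    using ib sph_sub \<Gamma>_def by simp
  have pna: "p \<notin> path_image (reversepath \<alpha>)" using pncb ia sphcb by (auto simp: path_image_reversepath)
  have pnb: "p \<notin> path_image \<beta>" using pncb ib sphcb by auto
  have W1: "\<forall>z \<in> inside(path_image C1). winding_number C1 z = 1" unfolding C1_def
    by (rule core[OF sg cg pos pP pR pra e1 e2 e3a e4a PR dec sC1[unfolded C1_def] Qa pinP pnR pna])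
  have W2: "\<forall>z \<in> inside(path_image C2). winding_number C2 z = 1" unfolding C2_def
    by (rule core[OF sg cg pos pP pR pb e1 e2 e3b e4b PR dec sC2[unfolded C2_def] Qb pinP pnR pnb])
  have iC1: "path_image C1 = subarc g a b \<union> subarc (circlepath c r) a b"
    unfolding C1_def sub_g sub_ab[unfolded cp_def] using eP ea by (simp add: path_image_join)
  have iC2: "path_image C2 = subarc g a b \<union> subarc (circlepath c r) b a"
    unfolding C2_def sub_g sub_ba[unfolded cp_def] using eP eb by (simp add: path_image_join)
  have c_ball: "c \<in> ball c r" using assms(3) by simp
  have cG: "c \<notin> \<Gamma>" using c_ball ballG by blast
  have cP: "c \<notin> path_image P" using cG iPR by auto
  have ca: "c \<notin> path_image \<alpha>" using ia assms(3) by auto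
  have cb: "c \<notin> path_image \<beta>" using ib assms(3) by auto
  have wab: "winding_number \<alpha> c + winding_number \<beta> c = 1"
  proof -
    have ck2c: "c \<notin> path_image k2" using ik2 assms(3) by auto
    have "winding_number \<alpha> c + winding_number \<beta> c = winding_number (subpath 0 1 k2) c"
      unfolding \<alpha>_def \<beta>_def using AD2(1,2) ck2c by (intro winding_number_subpath_combine[OF pk2]) auto
    also have "\<dots> = winding_number cp c" unfolding k2_def
      using winding_number_shiftpath[OF simple_path_imp_path[OF scp] _ ccp, of c u] u ik2 icp ck2c by simp
    also have "\<dots> = 1" unfolding cp_def using winding_number_circlepath_centre[OF assms(3)] .
    finally show ?thesis .
  qed
  have w1: "winding_number C1 c = winding_number P c - winding_number \<alpha> c"
  proof -
    have "winding_number C1 c = winding_number P c + winding_number (reversepath \<alpha>) c"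
      unfolding C1_def by (rule winding_number_join) (use pP cP pa ca eP ea in auto)
    then show ?thesis using winding_number_reversepath[OF pa ca] by simp
  qed
  have w2: "winding_number C2 c = winding_number P c + winding_number \<beta> c"
    unfolding C2_def by (rule winding_number_join) (use pP cP pb cb eP eb in auto)
  have wb: "winding_number \<beta> c = 1 - winding_number \<alpha> c" using wab by (simp add: eq_diff_eq add.commute)
  have w12: "winding_number C2 c = winding_number C1 c + 1"
    unfolding w1 w2 wb by (simp add: algebra_simps)
  have pC1: "path C1" "pathfinish C1 = pathstart C1" using sC1 simple_path_imp_path
    by (blast, simp add: C1_def eP ea)
  have pC2: "path C2" "pathfinish C2 = pathstart C2" using sC2 simple_path_imp_path
    by (blast, simp add: C2_def eP eb)
  have cC1: "c \<notin> path_image C1" unfolding C1_def using cP ca eP ea by (simp add: path_image_join)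
  have cC2: "c \<notin> path_image C2" unfolding C2_def using cP cb eP eb by (simp add: path_image_join)
  have cin2_or: "winding_number C2 c = 1 \<or> winding_number C2 c = 0"
  proof -
    have "c \<in> inside (path_image C2) \<or> c \<in> outside (path_image C2)"
      using cC2 inside_Un_outside by blast
    then show ?thesis
    proof
      assume "c \<in> inside (path_image C2)" then show ?thesis using W2 by blast
    next
      assume "c \<in> outside (path_image C2)" then show ?thesis
        using winding_number_zero_in_outside[OF pC2] by blast
    qed
  qed
  have cnin1: "c \<notin> inside (path_image C1)"
  proof
    assume "c \<in> inside (path_image C1)"
    then have "winding_number C1 c = 1" using W1 by blast
    then have "winding_number C2 c = 2" using w12 by simp
    then show False using cin2_or by simp
  qed
  have cout1: "c \<in> outside (path_image C1)"
    using cC1 cnin1 inside_Un_outside[of "path_image C1"] by blast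
  then have "winding_number C1 c = 0" using winding_number_zero_in_outside[OF pC1] by blast
  then have w21: "winding_number C2 c = 1" using w12 by simp
  have cin2: "c \<in> inside (path_image C2)"
  proof (rule ccontr)
    assume "c \<notin> inside (path_image C2)"
    then have "c \<in> outside (path_image C2)" using cC2 inside_Un_outside[of "path_image C2"] by blast
    then have "winding_number C2 c = 0" using winding_number_zero_in_outside[OF pC2] by blast
    then show False using w21 by simp
  qed
  have bP: "ball c r \<inter> path_image P = {}" using PcB a_sph b_sph by auto
  have bC1: "ball c r \<subseteq> - path_image C1" unfolding C1_def using bP ia eP ea
    by (auto simp: path_image_join)
  have bC2: "ball c r \<subseteq> - path_image C2" unfolding C2_def using bP ib eP eb
    by (auto simp: path_image_join)
  have "ball c r \<subseteq> outside (path_image C1)"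
  proof
    fix y assume "y \<in> ball c r"
    then have "connected_component (- path_image C1) c y"
      unfolding connected_component_def using bC1 c_ball by (meson connected_ball)
    then show "y \<in> outside (path_image C1)" using outside_same_component cout1 by blast
  qed
  moreover have "ball c r \<subseteq> inside (path_image C2)"
  proof
    fix y assume "y \<in> ball c r"
    then have "connected_component (- path_image C2) c y"
      unfolding connected_component_def using bC2 c_ball by (meson connected_ball)
    then show "y \<in> inside (path_image C2)" using inside_same_component cin2 by blast
  qed
  ultimately show ?thesis using iC1 iC2 by simp
qed

end
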